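(* Let $G$ be a finite group and $p$ a prime. If $|G'\cap Z(G)|=p$ and $C_G(G')$ is non-abelian, then there is a positive integer $s$ such that $C_G(G')/Z(C_G(G'))\cong (C_p\times C_p)^s$ and $$\Pr(C_G(G'))=\frac{1}{p}\left(1+\frac{p-1}{p^{2s}}\right).$$
   Context: $G'$ is the commutator subgroup, $Z(\cdot)$ the center, $C_G(G')$ the centralizer of $G'$ in $G$. For a finite group $H$, $\Pr(H)=\frac{|\{(x,y)\in H\times H : xy=yx\}|}{|H|^2}$. $(C_p\times C_p)^s$ is the direct product of $s$ copies of $C_p\times C_p$. *)

theory Defs
  imports "HOL-Algebra.Algebra"
begin

definition center :: "('a, 'b) monoid_scheme \<Rightarrow> 'a set" where
  "center G = {z \<in> carrier G. \<forall>g \<in> carrier G. z \<otimes>\<^bsub>G\<^esub> g = g \<otimes>\<^bsub>G\<^esub> z}"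

definition centralizer :: "('a, 'b) monoid_scheme \<Rightarrow> 'a set \<Rightarrow> 'a set" where
  "centralizer G H = {g \<in> carrier G. \<forall>h \<in> H. g \<otimes>\<^bsub>G\<^esub> h = h \<otimes>\<^bsub>G\<^esub> g}"

definition comm_prob :: "('a, 'b) monoid_scheme \<Rightarrow> real" where
  "comm_prob H = real (card {(x, y). x \<in> carrier H \<and> y \<in> carrier H \<and> x \<otimes>\<^bsub>H\<^esub> y = y \<otimes>\<^bsub>H\<^esub> x})
                 / (real (card (carrier H)))^2"

end

theory Submission
  imports Defs
begin

abbreviation EE :: "nat \<Rightarrow> (int \<times> int) monoid" where "EE p \<equiv> integer_mod_group p \<times>\<times> integer_mod_group p"
abbreviation PP :: "nat \<Rightarrow> nat \<Rightarrow> (nat \<Rightarrow> int \<times> int) monoid" where "PP p s \<equiv> product_group {..<s} (\<lambda>_. EE p)"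

lemma (in group) pow_mod_p:
  assumes "x \<in> carrier G" "x [^] (p::nat) = \<one>"
  shows "x [^] (n mod p) = x [^] n"
proof -
  have "x [^] n = x [^] (p * (n div p) + n mod p)" by (simp only: mult_div_mod_eq)
  also have "\<dots> = (x [^] p) [^] (n div p) \<otimes> x [^] (n mod p)"
    using assms by (metis nat_pow_mult nat_pow_pow)
  also have "\<dots> = x [^] (n mod p)" using assms by simp
  finally show ?thesis by simp
qed

lemma group_EE: "group (EE p)"
  by (simp add: DirProd_group)

lemma group_PP: "group (PP p s)"
  by (simp add: DirProd_group)

lemma mult_EE: "u \<otimes>\<^bsub>EE p\<^esub> v = ((fst u + fst v) mod int p, (snd u + snd v) mod int p)"
  by (cases u, cases v) simp

lemma nat_mod_add: "0 \<le> a \<Longrightarrow> 0 \<le> b \<Longrightarrow> nat ((a+b) mod int p) = (nat a + nat b) mod p"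
  by (simp add: nat_mod_distrib nat_add_distrib)

lemma (in comm_group) step_iso:
  assumes p: "p > 0"
    and x: "x \<in> carrier G" "x [^] p = \<one>" and y: "y \<in> carrier G" "y [^] p = \<one>"
    and W: "subgroup W G" and psi: "\<psi> \<in> iso (PP p s) (G\<lparr>carrier := W\<rparr>)"
    and uniq: "\<And>a b w. a < p \<Longrightarrow> b < p \<Longrightarrow> w \<in> W \<Longrightarrow> x [^] a \<otimes> y [^] b \<otimes> w = \<one> \<Longrightarrow> a = 0 \<and> b = 0"
    and surj: "\<And>v. v \<in> carrier G \<Longrightarrow> \<exists>a b w. w \<in> W \<and> v = x [^] (a::nat) \<otimes> y [^] (b::nat) \<otimes> w"
  shows "PP p (Suc s) \<cong> G"
proof -
  define \<Phi> where "\<Phi> f = x [^] nat (fst (f s)) \<otimes> y [^] nat (snd (f s)) \<otimes> \<psi> (restrict f {..<s})"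
    for f :: "nat \<Rightarrow> int \<times> int"
  have gW: "group (G\<lparr>carrier := W\<rparr>)" using W by (rule subgroup_imp_group)
  interpret psi: group_hom "PP p s" "G\<lparr>carrier := W\<rparr>" \<psi>
    using psi gW group_PP by (simp add: group_hom_def group_hom_axioms_def iso_iff)
  have psiW: "\<psi> r \<in> W" if "r \<in> carrier (PP p s)" for r
    using psi.hom_closed[OF that] by simp
  have psiG: "\<psi> r \<in> carrier G" if "r \<in> carrier (PP p s)" for r
    using psiW[OF that] W subgroup.subset by blast
  have psimult: "\<psi> (r \<otimes>\<^bsub>PP p s\<^esub> r') = \<psi> r \<otimes> \<psi> r'"
    if "r \<in> carrier (PP p s)" "r' \<in> carrier (PP p s)" for r r'
    using psi.hom_mult[OF that] by simp
  have psiinj: "r = \<one>\<^bsub>PP p s\<^esub>" if "r \<in> carrier (PP p s)" "\<psi> r = \<one>" for r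
  proof -
    have "\<psi> r = \<psi> \<one>\<^bsub>PP p s\<^esub>" using that psi.hom_one by simp
    moreover have "inj_on \<psi> (carrier (PP p s))" using psi by (simp add: iso_iff)
    ultimately show ?thesis using that psi.G.one_closed by (meson inj_onD)
  qed
  have psisurj: "\<exists>r \<in> carrier (PP p s). \<psi> r = w" if "w \<in> W" for w
    using psi that by (auto simp: iso_iff)
  have restr: "restrict f {..<s} \<in> carrier (PP p s)" if "f \<in> carrier (PP p (Suc s))" for f
    using that by (auto simp: PiE_iff)
  have fs: "f s \<in> {0..<int p} \<times> {0..<int p}" if "f \<in> carrier (PP p (Suc s))" for f
    using that p by (auto simp: PiE_iff carrier_integer_mod_group)
  have PhiG: "\<Phi> f \<in> carrier G" if "f \<in> carrier (PP p (Suc s))" for f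
    unfolding \<Phi>_def using x y psiG[OF restr[OF that]] by simp
  have hom: "\<Phi> \<in> hom (PP p (Suc s)) G"
  proof (rule homI)
    fix f g assume f: "f \<in> carrier (PP p (Suc s))" and g: "g \<in> carrier (PP p (Suc s))"
    obtain a1 b1 where fs1: "f s = (a1, b1)" "0 \<le> a1" "0 \<le> b1" using fs[OF f] by auto
    obtain a2 b2 where gs1: "g s = (a2, b2)" "0 \<le> a2" "0 \<le> b2" using fs[OF g] by auto
    have fgs: "(f \<otimes>\<^bsub>PP p (Suc s)\<^esub> g) s = ((a1 + a2) mod int p, (b1 + b2) mod int p)"
      using fs1 gs1 by (simp add: mult_EE)
    have r: "restrict (f \<otimes>\<^bsub>PP p (Suc s)\<^esub> g) {..<s} = restrict f {..<s} \<otimes>\<^bsub>PP p s\<^esub> restrict g {..<s}"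
      by (auto simp: fun_eq_iff)
    have ex: "x [^] nat ((a1 + a2) mod int p) = x [^] nat a1 \<otimes> x [^] nat a2"
      using fs1 gs1 x by (simp only: nat_mod_add pow_mod_p nat_pow_mult)
    have ey: "y [^] nat ((b1 + b2) mod int p) = y [^] nat b1 \<otimes> y [^] nat b2"
      using fs1 gs1 y by (simp only: nat_mod_add pow_mod_p nat_pow_mult)
    show "\<Phi> (f \<otimes>\<^bsub>PP p (Suc s)\<^esub> g) = \<Phi> f \<otimes> \<Phi> g"
      unfolding \<Phi>_def fgs r using fs1 gs1 ex ey x y psimult[OF restr[OF f] restr[OF g]]
        psiG[OF restr[OF f]] psiG[OF restr[OF g]]
      by (simp add: m_ac)
  qed (use PhiG in auto)
  interpret h: group_hom "PP p (Suc s)" G \<Phi>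
    using hom group_PP by (simp add: group_hom_def group_hom_axioms_def is_group)
  have "\<Phi> \<in> iso (PP p (Suc s)) G"
  proof (rule h.iso_iff[THEN iffD2], intro conjI subsetI ballI impI)
    fix v assume v: "v \<in> carrier G"
    obtain a b w where w: "w \<in> W" "v = x [^] (a::nat) \<otimes> y [^] (b::nat) \<otimes> w" using surj[OF v] by blast
    obtain r where r: "r \<in> carrier (PP p s)" "\<psi> r = w" using psisurj[OF w(1)] by blast
    define f where "f = (\<lambda>i\<in>{..<Suc s}. if i = s then (int (a mod p), int (b mod p)) else r i)"
    have fc: "f \<in> carrier (PP p (Suc s))"
      unfolding f_def carrier_product_group restrict_PiE_iff
    proof
      fix i assume i: "i \<in> {..<Suc s}"
      have "int (a mod p) < int p" "int (b mod p) < int p" using p by simp_all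
      then have c1: "(int (a mod p), int (b mod p)) \<in> carrier (EE p)"
        using p by (simp add: carrier_integer_mod_group)
      have c2: "i \<noteq> s \<Longrightarrow> r i \<in> carrier (EE p)" using r(1) i by (simp add: PiE_iff)
      show "(if i = s then (int (a mod p), int (b mod p)) else r i) \<in> carrier (EE p)"
        using c1 c2 by (cases "i = s") simp_all
    qed
    have "restrict f {..<s} = r"
    proof
      fix i show "restrict f {..<s} i = r i"
      proof (cases "i < s")
        case True then show ?thesis by (simp add: f_def)
      next
        case False
        then have "r i = undefined" using r(1) by (intro PiE_arb[of r "{..<s}"]) auto
        then show ?thesis using False by simp
      qed
    qed
    moreover have "f s = (int (a mod p), int (b mod p))" by (simp add: f_def)
    ultimately have "\<Phi> f = x [^] (a mod p) \<otimes> y [^] (b mod p) \<otimes> w"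
      unfolding \<Phi>_def using r by simp
    then have "\<Phi> f = v" using w x y by (simp only: pow_mod_p)
    then show "v \<in> \<Phi> ` carrier (PP p (Suc s))" using fc by blast
  next
    fix f assume f: "f \<in> carrier (PP p (Suc s))" and e: "\<Phi> f = \<one>"
    obtain a1 b1 where fs1: "f s = (a1, b1)" "0 \<le> a1" "0 \<le> b1" "a1 < int p" "b1 < int p"
      using fs[OF f] by auto
    have e': "x [^] nat a1 \<otimes> y [^] nat b1 \<otimes> \<psi> (restrict f {..<s}) = \<one>"
      using e unfolding \<Phi>_def fs1(1) by (simp only: fst_conv snd_conv)
    have "nat a1 = 0 \<and> nat b1 = 0"
      by (rule uniq[OF _ _ psiW[OF restr[OF f]] e']) (use fs1 in auto)
    then have z: "a1 = 0" "b1 = 0" using fs1 by auto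
    have "x [^] nat a1 = \<one>" "y [^] nat b1 = \<one>" using z by auto
    then have "\<psi> (restrict f {..<s}) = \<one>"
      using e' psiG[OF restr[OF f]] by simp
    then have "restrict f {..<s} = \<one>\<^bsub>PP p s\<^esub>" using psiinj restr[OF f] by blast
    then have rf1: "restrict f {..<s} = \<one>\<^bsub>PP p s\<^esub>" .
    show "f = \<one>\<^bsub>PP p (Suc s)\<^esub>"
    proof (rule ext)
      fix i show "f i = \<one>\<^bsub>PP p (Suc s)\<^esub> i"
      proof (cases "i < s")
        case True
        then have "f i = restrict f {..<s} i" by simp
        also have "\<dots> = (0,0)" using \<open>restrict f {..<s} = \<one>\<^bsub>PP p s\<^esub>\<close> True by simp
        finally show ?thesis using True by simp
      next
        case False
        show ?thesis
        proof (cases "i = s")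
          case True
          have "f s = (0,0)" using fs1(1) z by simp
          then show ?thesis using True by simp
        next
          case False
          then have "i \<notin> {..<Suc s}" using \<open>\<not> i < s\<close> by simp
          have "f i = undefined" using f \<open>i \<notin> {..<Suc s}\<close> by (metis PiE_arb carrier_product_group)
          then show ?thesis using \<open>i \<notin> {..<Suc s}\<close> by simp
        qed
      qed
    qed
  qed
  then show ?thesis by (rule is_isoI)
qed

locale symp = V: group V + K: comm_group K
  for V :: "('a,'b) monoid_scheme" and K :: "('c,'d) monoid_scheme" +
  fixes B :: "'a \<Rightarrow> 'a \<Rightarrow> 'c" and p :: nat
  assumes p: "Factorial_Ring.prime p" and cardK: "card (carrier K) = p"
    and Bc: "\<And>u v. u \<in> carrier V \<Longrightarrow> v \<in> carrier V \<Longrightarrow> B u v \<in> carrier K"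
    and Bl: "\<And>u v w. u \<in> carrier V \<Longrightarrow> v \<in> carrier V \<Longrightarrow> w \<in> carrier V \<Longrightarrow> B (u \<otimes>\<^bsub>V\<^esub> v) w = B u w \<otimes>\<^bsub>K\<^esub> B v w"
    and Br: "\<And>u v w. u \<in> carrier V \<Longrightarrow> v \<in> carrier V \<Longrightarrow> w \<in> carrier V \<Longrightarrow> B u (v \<otimes>\<^bsub>V\<^esub> w) = B u v \<otimes>\<^bsub>K\<^esub> B u w"
    and Bs: "\<And>u v. u \<in> carrier V \<Longrightarrow> v \<in> carrier V \<Longrightarrow> B v u = inv\<^bsub>K\<^esub> (B u v)"
    and Balt: "\<And>u. u \<in> carrier V \<Longrightarrow> B u u = \<one>\<^bsub>K\<^esub>"
    and Bnd: "\<And>u. u \<in> carrier V \<Longrightarrow> (\<And>v. v \<in> carrier V \<Longrightarrow> B u v = \<one>\<^bsub>K\<^esub>) \<Longrightarrow> u = \<one>\<^bsub>V\<^esub>"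
begin

lemma B_one_r: assumes u: "u \<in> carrier V" shows "B u \<one>\<^bsub>V\<^esub> = \<one>\<^bsub>K\<^esub>"
proof -
  have "B u \<one>\<^bsub>V\<^esub> = B u \<one>\<^bsub>V\<^esub> \<otimes>\<^bsub>K\<^esub> B u \<one>\<^bsub>V\<^esub>" using Br[OF u V.one_closed V.one_closed] by simp
  then show ?thesis using Bc[OF u V.one_closed] by simp
qed

lemma B_one_l: assumes u: "u \<in> carrier V" shows "B \<one>\<^bsub>V\<^esub> u = \<one>\<^bsub>K\<^esub>"
proof -
  have "B \<one>\<^bsub>V\<^esub> u = B \<one>\<^bsub>V\<^esub> u \<otimes>\<^bsub>K\<^esub> B \<one>\<^bsub>V\<^esub> u" using Bl[OF V.one_closed V.one_closed u] by simp
  then show ?thesis using Bc[OF V.one_closed u] by simp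
qed

lemma B_inv_r: assumes u: "u \<in> carrier V" and v: "v \<in> carrier V" shows "B u (inv\<^bsub>V\<^esub> v) = inv\<^bsub>K\<^esub> (B u v)"
proof -
  have "B u v \<otimes>\<^bsub>K\<^esub> B u (inv\<^bsub>V\<^esub> v) = \<one>\<^bsub>K\<^esub>" using Br[OF u v V.inv_closed[OF v]] B_one_r[OF u] v by simp
  then have "B u (inv\<^bsub>V\<^esub> v) \<otimes>\<^bsub>K\<^esub> B u v = \<one>\<^bsub>K\<^esub>" using Bc u v K.m_comm V.inv_closed by metis
  then show ?thesis using Bc u v V.inv_closed K.inv_equality by metis
qed

lemma B_inv_l: assumes u: "u \<in> carrier V" and v: "v \<in> carrier V" shows "B (inv\<^bsub>V\<^esub> u) v = inv\<^bsub>K\<^esub> (B u v)"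
proof -
  have "B u v \<otimes>\<^bsub>K\<^esub> B (inv\<^bsub>V\<^esub> u) v = \<one>\<^bsub>K\<^esub>" using Bl[OF u V.inv_closed[OF u] v] B_one_l[OF v] u by simp
  then have "B (inv\<^bsub>V\<^esub> u) v \<otimes>\<^bsub>K\<^esub> B u v = \<one>\<^bsub>K\<^esub>" using Bc u v K.m_comm V.inv_closed by metis
  then show ?thesis using Bc u v V.inv_closed K.inv_equality by metis
qed

lemma B_pow_r: assumes u: "u \<in> carrier V" and v: "v \<in> carrier V" shows "B u (v [^]\<^bsub>V\<^esub> (n::nat)) = B u v [^]\<^bsub>K\<^esub> n"
proof (induction n)
  case 0 then show ?case using B_one_r[OF u] by simp
next
  case (Suc n) then show ?case using Br[OF u V.nat_pow_closed[OF v] v] by simp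
qed

lemma B_pow_l: assumes u: "u \<in> carrier V" and v: "v \<in> carrier V" shows "B (u [^]\<^bsub>V\<^esub> (n::nat)) v = B u v [^]\<^bsub>K\<^esub> n"
proof (induction n)
  case 0 then show ?case using B_one_l[OF v] by simp
next
  case (Suc n) then show ?case using Bl[OF V.nat_pow_closed[OF u] u v] by simp
qed

lemma V_comm: assumes u: "u \<in> carrier V" and v: "v \<in> carrier V" shows "u \<otimes>\<^bsub>V\<^esub> v = v \<otimes>\<^bsub>V\<^esub> u"
proof -
  define c where "c = (u \<otimes>\<^bsub>V\<^esub> v) \<otimes>\<^bsub>V\<^esub> inv\<^bsub>V\<^esub> (v \<otimes>\<^bsub>V\<^esub> u)"
  have cc: "c \<in> carrier V" using u v by (simp add: c_def)
  have "B c z = \<one>\<^bsub>K\<^esub>" if z: "z \<in> carrier V" for z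
  proof -
    have "B c z = (B u z \<otimes>\<^bsub>K\<^esub> B v z) \<otimes>\<^bsub>K\<^esub> inv\<^bsub>K\<^esub> (B v z \<otimes>\<^bsub>K\<^esub> B u z)"
      unfolding c_def using u v z by (simp add: Bl B_inv_l)
    also have "\<dots> = \<one>\<^bsub>K\<^esub>" using Bc[OF u z] Bc[OF v z] by (simp add: K.m_comm)
    finally show ?thesis .
  qed
  then have "c = \<one>\<^bsub>V\<^esub>" using Bnd[OF cc] by blast
  moreover have "c \<otimes>\<^bsub>V\<^esub> (v \<otimes>\<^bsub>V\<^esub> u) = u \<otimes>\<^bsub>V\<^esub> v" using u v by (simp add: c_def V.m_assoc)
  ultimately show ?thesis using u v by simp
qed

lemma V_comm_group: "comm_group V"
  by (simp add: V.group_comm_groupI V_comm)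

lemma orderK: "order K = p" using cardK by (simp add: order_def)

lemma pow_p: assumes u: "u \<in> carrier V" shows "u [^]\<^bsub>V\<^esub> p = \<one>\<^bsub>V\<^esub>"
proof (rule Bnd)
  show "u [^]\<^bsub>V\<^esub> p \<in> carrier V" using u by simp
  fix z assume z: "z \<in> carrier V"
  show "B (u [^]\<^bsub>V\<^esub> p) z = \<one>\<^bsub>K\<^esub>" using B_pow_l[OF u z] K.pow_order_eq_1[OF Bc[OF u z]] orderK by simp
qed

lemma ord_p: assumes h: "h \<in> carrier K" "h \<noteq> \<one>\<^bsub>K\<^esub>" shows "K.ord h = p"
proof -
  have "K.ord h dvd p" using K.ord_dvd_group_order[OF h(1)] orderK by simp
  moreover have "K.ord h \<noteq> 1" using K.ord_eq_1[OF h(1)] h(2) by simp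
  ultimately show ?thesis using p by (meson prime_nat_iff)
qed

lemma gen: assumes h: "h \<in> carrier K" "h \<noteq> \<one>\<^bsub>K\<^esub>" and k: "k \<in> carrier K"
  shows "\<exists>n. k = h [^]\<^bsub>K\<^esub> (n::nat)"
proof -
  have p0: "p > 0" using p prime_gt_0_nat by blast
  have fin: "finite (carrier K)" using cardK p0 card_ge_0_finite by auto
  let ?S = "(\<lambda>n. h [^]\<^bsub>K\<^esub> n) ` {0 .. p - 1}"
  have "inj_on (\<lambda>n. h [^]\<^bsub>K\<^esub> n) {0 .. p - 1}" using K.ord_inj[OF h(1)] ord_p[OF h] by simp
  then have "card ?S = p" using p0 by (simp add: card_image)
  moreover have "?S \<subseteq> carrier K" using h by auto
  ultimately have "?S = carrier K" using fin cardK by (metis card_subset_eq)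
  then show ?thesis using k by auto
qed

lemma decomp:
  assumes u: "u \<in> carrier V" and v: "v \<in> carrier V" and h: "B u v \<noteq> \<one>\<^bsub>K\<^esub>" and z: "z \<in> carrier V"
  shows "\<exists>a b w. w \<in> carrier V \<and> B u w = \<one>\<^bsub>K\<^esub> \<and> B v w = \<one>\<^bsub>K\<^esub> \<and> z = u [^]\<^bsub>V\<^esub> (a::nat) \<otimes>\<^bsub>V\<^esub> v [^]\<^bsub>V\<^esub> (b::nat) \<otimes>\<^bsub>V\<^esub> w"
proof -
  let ?h = "B u v"
  have hc: "?h \<in> carrier K" using Bc u v by blast
  obtain b where b: "B u z = ?h [^]\<^bsub>K\<^esub> (b::nat)" using gen[OF hc h Bc[OF u z]] by blast
  obtain a where a: "inv\<^bsub>K\<^esub> (B v z) = ?h [^]\<^bsub>K\<^esub> (a::nat)" using gen[OF hc h K.inv_closed[OF Bc[OF v z]]] by blast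
  define t where "t = u [^]\<^bsub>V\<^esub> a \<otimes>\<^bsub>V\<^esub> v [^]\<^bsub>V\<^esub> b"
  have tc: "t \<in> carrier V" using u v by (simp add: t_def)
  define w where "w = z \<otimes>\<^bsub>V\<^esub> inv\<^bsub>V\<^esub> t"
  have wc: "w \<in> carrier V" using z tc by (simp add: w_def)
  have Buw: "B u w = \<one>\<^bsub>K\<^esub>"
  proof -
    have "B u w = B u z \<otimes>\<^bsub>K\<^esub> inv\<^bsub>K\<^esub> (B u t)" using u z tc by (simp add: w_def Br B_inv_r)
    also have "B u t = \<one>\<^bsub>K\<^esub> \<otimes>\<^bsub>K\<^esub> ?h [^]\<^bsub>K\<^esub> b" using u v by (simp add: t_def Br B_pow_r Balt)
    finally show ?thesis using b hc by simp
  qed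
  have Bvw: "B v w = \<one>\<^bsub>K\<^esub>"
  proof -
    have "B v w = B v z \<otimes>\<^bsub>K\<^esub> inv\<^bsub>K\<^esub> (B v t)" using v z tc by (simp add: w_def Br B_inv_r)
    also have "B v t = inv\<^bsub>K\<^esub> ?h [^]\<^bsub>K\<^esub> a \<otimes>\<^bsub>K\<^esub> \<one>\<^bsub>K\<^esub>" using u v by (simp add: t_def Br B_pow_r Balt Bs[OF u v])
    also have "inv\<^bsub>K\<^esub> ?h [^]\<^bsub>K\<^esub> a = inv\<^bsub>K\<^esub> (?h [^]\<^bsub>K\<^esub> a)" using hc by (simp add: K.nat_pow_inv)
    also have "\<dots> = B v z" using a Bc[OF v z] by (metis K.inv_inv)
    finally show ?thesis using Bc[OF v z] by simp
  qed
  have "z = t \<otimes>\<^bsub>V\<^esub> w" using z tc by (simp add: w_def V_comm[OF z] V.m_assoc[symmetric])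
  then have "z = u [^]\<^bsub>V\<^esub> a \<otimes>\<^bsub>V\<^esub> v [^]\<^bsub>V\<^esub> b \<otimes>\<^bsub>V\<^esub> w" by (simp add: t_def)
  then show ?thesis using wc Buw Bvw by blast
qed

lemma uniq:
  assumes u: "u \<in> carrier V" and v: "v \<in> carrier V" and h: "B u v \<noteq> \<one>\<^bsub>K\<^esub>"
    and ab: "a < p" "b < p" and w: "w \<in> carrier V" "B u w = \<one>\<^bsub>K\<^esub>" "B v w = \<one>\<^bsub>K\<^esub>"
    and e: "u [^]\<^bsub>V\<^esub> (a::nat) \<otimes>\<^bsub>V\<^esub> v [^]\<^bsub>V\<^esub> (b::nat) \<otimes>\<^bsub>V\<^esub> w = \<one>\<^bsub>V\<^esub>"
  shows "a = 0 \<and> b = 0"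
proof -
  let ?h = "B u v"
  have hc: "?h \<in> carrier K" using Bc u v by blast
  have "\<one>\<^bsub>K\<^esub> = B u (u [^]\<^bsub>V\<^esub> a \<otimes>\<^bsub>V\<^esub> v [^]\<^bsub>V\<^esub> b \<otimes>\<^bsub>V\<^esub> w)" using e B_one_r[OF u] by simp
  also have "\<dots> = ?h [^]\<^bsub>K\<^esub> b" using u v w hc by (simp add: Br B_pow_r Balt)
  finally have "?h [^]\<^bsub>K\<^esub> b = \<one>\<^bsub>K\<^esub>" by simp
  then have "p dvd b" using K.pow_eq_id[OF hc] ord_p[OF hc h] by simp
  then have b0: "b = 0" using ab(2) nat_dvd_not_less neq0_conv by blast
  have "\<one>\<^bsub>K\<^esub> = B v (u [^]\<^bsub>V\<^esub> a \<otimes>\<^bsub>V\<^esub> v [^]\<^bsub>V\<^esub> b \<otimes>\<^bsub>V\<^esub> w)" using e B_one_r[OF v] by simp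
  also have "\<dots> = inv\<^bsub>K\<^esub> ?h [^]\<^bsub>K\<^esub> a" using u v w hc by (simp add: Br B_pow_r Balt Bs[OF u v])
  also have "\<dots> = inv\<^bsub>K\<^esub> (?h [^]\<^bsub>K\<^esub> a)" using hc by (simp add: K.nat_pow_inv)
  finally have i1: "inv\<^bsub>K\<^esub> (?h [^]\<^bsub>K\<^esub> a) = \<one>\<^bsub>K\<^esub>" by simp
  have "?h [^]\<^bsub>K\<^esub> a = inv\<^bsub>K\<^esub> (inv\<^bsub>K\<^esub> (?h [^]\<^bsub>K\<^esub> a))" using hc by simp
  also have "\<dots> = \<one>\<^bsub>K\<^esub>" using i1 by simp
  finally have "?h [^]\<^bsub>K\<^esub> a = \<one>\<^bsub>K\<^esub>" .
  then have "p dvd a" using K.pow_eq_id[OF hc] ord_p[OF hc h] by simp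
  then have "a = 0" using ab(1) nat_dvd_not_less neq0_conv by blast
  then show ?thesis using b0 by simp
qed

end


lemma symp_iso:
  assumes "symp V K B p" "finite (carrier V)"
  shows "\<exists>s. PP p s \<cong> V"
  using assms
proof (induction "card (carrier V)" arbitrary: V rule: less_induct)
  case less
  interpret S: symp V K B p by fact
  show ?case
  proof (cases "carrier V = {\<one>\<^bsub>V\<^esub>}")
    case True
    have "(\<lambda>_. \<one>\<^bsub>V\<^esub>) \<in> iso (PP p 0) V"
    proof (rule isoI)
      show "(\<lambda>_. \<one>\<^bsub>V\<^esub>) \<in> hom (PP p 0) V" by (rule homI) auto
      show "bij_betw (\<lambda>_. \<one>\<^bsub>V\<^esub>) (carrier (PP p 0)) (carrier V)"
        using True by (auto simp: bij_betw_def inj_on_def lessThan_0 PiE_empty_domain)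
    qed
    then have "PP p 0 \<cong> V" by (rule is_isoI)
    then show ?thesis by blast
  next
    case False
    then obtain u where u: "u \<in> carrier V" "u \<noteq> \<one>\<^bsub>V\<^esub>" using S.V.one_closed by blast
    then obtain v where v: "v \<in> carrier V" "B u v \<noteq> \<one>\<^bsub>K\<^esub>" using S.Bnd by blast
    define W where "W = {w \<in> carrier V. B u w = \<one>\<^bsub>K\<^esub> \<and> B v w = \<one>\<^bsub>K\<^esub>}"
    have Wsub: "W \<subseteq> carrier V" by (auto simp: W_def)
    have sub: "subgroup W V"
    proof
      show "W \<subseteq> carrier V" by (rule Wsub)
      show "\<one>\<^bsub>V\<^esub> \<in> W" using u v by (simp add: W_def S.B_one_r)
      fix x y assume "x \<in> W" "y \<in> W"
      then show "x \<otimes>\<^bsub>V\<^esub> y \<in> W" using u v by (simp add: W_def S.Br)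
    next
      fix x assume "x \<in> W"
      then show "inv\<^bsub>V\<^esub> x \<in> W" using u v by (simp add: W_def S.B_inv_r)
    qed
    have uW: "u \<notin> W"
    proof
      assume "u \<in> W"
      then have "B v u = \<one>\<^bsub>K\<^esub>" by (simp add: W_def)
      then have "inv\<^bsub>K\<^esub> (B u v) = \<one>\<^bsub>K\<^esub>" using S.Bs[OF u(1) v(1)] by simp
      then have "B u v = \<one>\<^bsub>K\<^esub>" using S.Bc[OF u(1) v(1)]
        by (metis S.K.inv_inv S.K.inv_one)
      then show False using v by simp
    qed
    have card_lt: "card W < card (carrier V)"
      using less.prems(2) Wsub uW u(1) by (metis psubset_card_mono psubsetI)
    let ?V' = "V\<lparr>carrier := W\<rparr>"
    have dec: "\<exists>a b w. w \<in> W \<and> z = u [^]\<^bsub>V\<^esub> (a::nat) \<otimes>\<^bsub>V\<^esub> v [^]\<^bsub>V\<^esub> (b::nat) \<otimes>\<^bsub>V\<^esub> w" if "z \<in> carrier V" for z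
      using S.decomp[OF u(1) v(1) v(2) that] by (auto simp: W_def)
    have symp': "symp ?V' K B p"
    proof (intro symp.intro symp_axioms.intro)
      show "group ?V'" using sub by (rule S.V.subgroup_imp_group)
      show "comm_group K" by (rule S.K.comm_group_axioms)
      show "Factorial_Ring.prime p" by (rule S.p)
      show "card (carrier K) = p" by (rule S.cardK)
    next
      fix x y assume "x \<in> carrier ?V'" "y \<in> carrier ?V'"
      then show "B x y \<in> carrier K" using Wsub S.Bc by auto
    next
      fix x y z assume "x \<in> carrier ?V'" "y \<in> carrier ?V'" "z \<in> carrier ?V'"
      then show "B (x \<otimes>\<^bsub>?V'\<^esub> y) z = B x z \<otimes>\<^bsub>K\<^esub> B y z" "B x (y \<otimes>\<^bsub>?V'\<^esub> z) = B x y \<otimes>\<^bsub>K\<^esub> B x z"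
        using Wsub S.Bl S.Br by (simp_all add: subset_iff)
    next
      fix x y assume "x \<in> carrier ?V'" "y \<in> carrier ?V'"
      then show "B y x = inv\<^bsub>K\<^esub> (B x y)" using Wsub S.Bs by auto
    next
      fix x assume "x \<in> carrier ?V'"
      then show "B x x = \<one>\<^bsub>K\<^esub>" using Wsub S.Balt by auto
    next
      fix x assume x: "x \<in> carrier ?V'" and nd: "\<And>y. y \<in> carrier ?V' \<Longrightarrow> B x y = \<one>\<^bsub>K\<^esub>"
      have xW: "x \<in> W" using x by simp
      have xc: "x \<in> carrier V" using xW Wsub by auto
      have "x = \<one>\<^bsub>V\<^esub>"
      proof (rule S.Bnd[OF xc])
        fix z assume z: "z \<in> carrier V"
        obtain a b w where w: "w \<in> W" "z = u [^]\<^bsub>V\<^esub> (a::nat) \<otimes>\<^bsub>V\<^esub> v [^]\<^bsub>V\<^esub> (b::nat) \<otimes>\<^bsub>V\<^esub> w" using dec[OF z] by blast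
        have wc: "w \<in> carrier V" using w Wsub by auto
        have "B x u = \<one>\<^bsub>K\<^esub>" using S.Bs[OF u(1) xc] xW by (simp add: W_def)
        moreover have "B x v = \<one>\<^bsub>K\<^esub>" using S.Bs[OF v(1) xc] xW by (simp add: W_def)
        moreover have "B x w = \<one>\<^bsub>K\<^esub>" using nd w(1) by simp
        ultimately show "B x z = \<one>\<^bsub>K\<^esub>" using w(2) u(1) v(1) wc xc
          by (simp add: S.Br S.B_pow_r)
      qed
      then show "x = \<one>\<^bsub>?V'\<^esub>" by simp
    qed
    have fin': "finite (carrier ?V')" using less.prems(2) Wsub finite_subset by auto
    obtain s where "PP p s \<cong> ?V'" using less.hyps[OF _ symp' fin'] card_lt by auto
    then obtain \<psi> where psi: "\<psi> \<in> iso (PP p s) ?V'" by (auto simp: is_iso_def)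
    have p0: "p > 0" using S.p prime_gt_0_nat by blast
    have "PP p (Suc s) \<cong> V"
    proof (rule comm_group.step_iso[OF S.V_comm_group p0 u(1) S.pow_p[OF u(1)] v(1) S.pow_p[OF v(1)] sub psi])
      fix a b w assume "a < p" "b < p" "w \<in> W" "u [^]\<^bsub>V\<^esub> a \<otimes>\<^bsub>V\<^esub> v [^]\<^bsub>V\<^esub> b \<otimes>\<^bsub>V\<^esub> w = \<one>\<^bsub>V\<^esub>"
      then show "a = 0 \<and> b = 0" using S.uniq[OF u(1) v(1) v(2)] Wsub by (auto simp: W_def)
    next
      fix z assume "z \<in> carrier V" then show "\<exists>a b w. w \<in> W \<and> z = u [^]\<^bsub>V\<^esub> (a::nat) \<otimes>\<^bsub>V\<^esub> v [^]\<^bsub>V\<^esub> (b::nat) \<otimes>\<^bsub>V\<^esub> w"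
        by (rule dec)
    qed
    then show ?thesis by blast
  qed
qed

definition cm :: "('a,'b) monoid_scheme \<Rightarrow> 'a \<Rightarrow> 'a \<Rightarrow> 'a" where
  "cm G x y = x \<otimes>\<^bsub>G\<^esub> y \<otimes>\<^bsub>G\<^esub> inv\<^bsub>G\<^esub> x \<otimes>\<^bsub>G\<^esub> inv\<^bsub>G\<^esub> y"

lemma prob_arith:
  fixes z Q p :: real
  assumes z: "z > 0" and Q: "Q > 0" and p: "p > 0"
  shows "(z * (Q * z) + (Q * z - z) * (Q * z / p)) / (Q * z) ^ 2 = 1 / p * (1 + (p - 1) / Q)"
proof -
  have e1: "z * (Q * z) + (Q * z - z) * (Q * z / p) = (Q * z * z) * ((p + Q - 1) / p)"
    using p by (simp add: field_simps)
  have e2: "1 / p * (1 + (p - 1) / Q) = (p + Q - 1) / (p * Q)" using p Q by (simp add: field_simps)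
  have e3: "(Q * z * z) * ((p + Q - 1) / p) / (Q * z) ^ 2 = (p + Q - 1) / (p * Q)"
    using p Q z by (simp add: power2_eq_square)
  show ?thesis using e1 e2 e3 by simp
qed

context group begin

lemma cm_closed [simp]: "x \<in> carrier G \<Longrightarrow> y \<in> carrier G \<Longrightarrow> cm G x y \<in> carrier G"
  by (simp add: cm_def)

lemma cm_alt: "x \<in> carrier G \<Longrightarrow> y \<in> carrier G \<Longrightarrow> cm G x y = (x \<otimes> y) \<otimes> inv (y \<otimes> x)"
  by (simp add: cm_def inv_mult_group m_assoc)

lemma cm_eq: "x \<in> carrier G \<Longrightarrow> y \<in> carrier G \<Longrightarrow> x \<otimes> y = cm G x y \<otimes> (y \<otimes> x)"
  by (simp add: cm_alt m_assoc)

lemma cm_one_iff: assumes x: "x \<in> carrier G" and y: "y \<in> carrier G" shows "cm G x y = \<one> \<longleftrightarrow> x \<otimes> y = y \<otimes> x"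
proof
  assume "cm G x y = \<one>"
  then show "x \<otimes> y = y \<otimes> x" using cm_eq[OF x y] x y by simp
next
  assume "x \<otimes> y = y \<otimes> x"
  then show "cm G x y = \<one>" using x y by (simp add: cm_alt)
qed

lemma cm_self [simp]: "x \<in> carrier G \<Longrightarrow> cm G x x = \<one>"
  by (simp add: cm_one_iff)

lemma cm_D: "x \<in> carrier G \<Longrightarrow> y \<in> carrier G \<Longrightarrow> cm G x y \<in> derived G (carrier G)"
  unfolding derived_def cm_def by (rule generate.incl) blast

lemma D_subgroup: "subgroup (derived G (carrier G)) G"
  by (simp add: derived_is_subgroup)

lemma D_normal: "derived G (carrier G) \<lhd> G"
  by (simp add: derived_is_normal normal_self)

lemma D_conj: "g \<in> carrier G \<Longrightarrow> d \<in> derived G (carrier G) \<Longrightarrow> g \<otimes> d \<otimes> inv g \<in> derived G (carrier G)"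
  using D_normal normal_inv_iff by blast

lemma D_carrier: "derived G (carrier G) \<subseteq> carrier G"
  using D_subgroup subgroup.subset by blast

lemma centralizer_subgroup: assumes "H \<subseteq> carrier G" shows "subgroup (centralizer G H) G"
proof
  show "centralizer G H \<subseteq> carrier G" by (auto simp: centralizer_def)
  show "\<one> \<in> centralizer G H" using assms by (auto simp: centralizer_def)
  fix x y assume x: "x \<in> centralizer G H" and y: "y \<in> centralizer G H"
  show "x \<otimes> y \<in> centralizer G H"
    unfolding centralizer_def
  proof (intro CollectI conjI ballI)
    show "x \<otimes> y \<in> carrier G" using x y by (simp add: centralizer_def)
    fix h assume h: "h \<in> H"
    have xc: "x \<in> carrier G" "y \<in> carrier G" "h \<in> carrier G" using x y h assms by (auto simp: centralizer_def)
    have "x \<otimes> y \<otimes> h = x \<otimes> (h \<otimes> y)" using y h xc by (simp add: m_assoc centralizer_def)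
    also have "\<dots> = (x \<otimes> h) \<otimes> y" using xc by (simp add: m_assoc)
    also have "\<dots> = h \<otimes> x \<otimes> y" using x h by (simp add: centralizer_def)
    finally show "x \<otimes> y \<otimes> h = h \<otimes> (x \<otimes> y)" using xc by (simp add: m_assoc)
  qed
next
  fix x assume x: "x \<in> centralizer G H"
  show "inv x \<in> centralizer G H"
    unfolding centralizer_def
  proof (intro CollectI conjI ballI)
    show "inv x \<in> carrier G" using x by (simp add: centralizer_def)
    fix h assume h: "h \<in> H"
    have xc: "x \<in> carrier G" "h \<in> carrier G" using x h assms by (auto simp: centralizer_def)
    have "x \<otimes> h = h \<otimes> x" using x h by (simp add: centralizer_def)
    then show "inv x \<otimes> h = h \<otimes> inv x" using xc
    proof -
      have "inv x \<otimes> h = inv x \<otimes> (h \<otimes> x) \<otimes> inv x" using xc by (simp add: m_assoc)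
      also have "\<dots> = inv x \<otimes> (x \<otimes> h) \<otimes> inv x" using \<open>x \<otimes> h = h \<otimes> x\<close> by simp
      also have "\<dots> = h \<otimes> inv x" using xc by (simp add: m_assoc[symmetric])
      finally show ?thesis .
    qed
  qed
qed

lemma center_subgroup: "subgroup (center G) G"
proof -
  have "center G = centralizer G (carrier G)" by (simp add: center_def centralizer_def)
  then show ?thesis using centralizer_subgroup by simp
qed


lemma inv_cancel_left [simp]: "x \<in> carrier G \<Longrightarrow> y \<in> carrier G \<Longrightarrow> inv x \<otimes> (x \<otimes> y) = y"
  by (simp add: m_assoc[symmetric])

lemma inv_cancel_left2 [simp]: "x \<in> carrier G \<Longrightarrow> y \<in> carrier G \<Longrightarrow> x \<otimes> (inv x \<otimes> y) = y"
  by (simp add: m_assoc[symmetric])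

lemma conj_mult: "g \<in> carrier G \<Longrightarrow> a \<in> carrier G \<Longrightarrow> b \<in> carrier G \<Longrightarrow>
   g \<otimes> (a \<otimes> b) \<otimes> inv g = (g \<otimes> a \<otimes> inv g) \<otimes> (g \<otimes> b \<otimes> inv g)"
  by (simp add: m_assoc)

lemma conj_inv: "g \<in> carrier G \<Longrightarrow> a \<in> carrier G \<Longrightarrow>
   g \<otimes> inv a \<otimes> inv g = inv (g \<otimes> a \<otimes> inv g)"
  by (simp add: inv_mult_group m_assoc)

lemma conj_cm: "g \<in> carrier G \<Longrightarrow> x \<in> carrier G \<Longrightarrow> y \<in> carrier G \<Longrightarrow>
   g \<otimes> cm G x y \<otimes> inv g = cm G (g \<otimes> x \<otimes> inv g) (g \<otimes> y \<otimes> inv g)"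
  unfolding cm_def by (simp add: inv_mult_group m_assoc)

end

locale cpsetup = group G for G (structure) + fixes p :: nat
  assumes fin: "finite (carrier G)" and p: "Factorial_Ring.prime p"
    and cardK: "card (derived G (carrier G) \<inter> center G) = p"
begin

abbreviation "D \<equiv> derived G (carrier G)"
abbreviation "C \<equiv> centralizer G D"

lemma C_sub: "subgroup C G" by (rule centralizer_subgroup[OF D_carrier])

lemma C_carr: "c \<in> C \<Longrightarrow> c \<in> carrier G" by (simp add: centralizer_def)

lemma C_comm: "c \<in> C \<Longrightarrow> d \<in> D \<Longrightarrow> c \<otimes> d = d \<otimes> c" by (simp add: centralizer_def)

lemma C_conj: assumes g: "g \<in> carrier G" and c: "c \<in> C" shows "g \<otimes> c \<otimes> inv g \<in> C"
  unfolding centralizer_def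
proof (intro CollectI conjI ballI)
  have cc: "c \<in> carrier G" using c by (rule C_carr)
  show "g \<otimes> c \<otimes> inv g \<in> carrier G" using g cc by simp
  fix d assume d: "d \<in> D"
  have dc: "d \<in> carrier G" using d D_carrier by auto
  define d' where "d' = inv g \<otimes> d \<otimes> g"
  have d'D: "d' \<in> D" using D_conj[OF inv_closed[OF g] d] g by (simp add: d'_def)
  have d'c: "d' \<in> carrier G" using d'D D_carrier by auto
  have e: "c \<otimes> d' = d' \<otimes> c" using C_comm[OF c d'D] .
  have "g \<otimes> c \<otimes> inv g \<otimes> d = g \<otimes> (c \<otimes> d') \<otimes> inv g"
    using g cc dc by (simp add: d'_def m_assoc)
  also have "\<dots> = g \<otimes> (d' \<otimes> c) \<otimes> inv g" using e by simp
  also have "\<dots> = d \<otimes> (g \<otimes> c \<otimes> inv g)"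
    using g cc dc by (simp add: d'_def m_assoc)
  finally show "g \<otimes> c \<otimes> inv g \<otimes> d = d \<otimes> (g \<otimes> c \<otimes> inv g)" .
qed

lemma cm_center: assumes x: "x \<in> C" and y: "y \<in> C" shows "cm G x y \<in> center G"
  unfolding center_def
proof (intro CollectI conjI ballI)
  have xc: "x \<in> carrier G" and yc: "y \<in> carrier G" using x y C_carr by auto
  show "cm G x y \<in> carrier G" using xc yc by simp
  fix g assume g: "g \<in> carrier G"
  define x' where "x' = g \<otimes> x \<otimes> inv g"
  define y' where "y' = g \<otimes> y \<otimes> inv g"
  have x'C: "x' \<in> C" using C_conj[OF g x] by (simp add: x'_def)
  have y'C: "y' \<in> C" using C_conj[OF g y] by (simp add: y'_def)
  define d1 where "d1 = inv x \<otimes> x'"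
  define d2 where "d2 = inv y \<otimes> y'"
  have d1C: "d1 \<in> C" unfolding d1_def using x x'C C_sub by (simp add: subgroup.m_closed subgroup.m_inv_closed)
  have d2C: "d2 \<in> C" unfolding d2_def using y y'C C_sub by (simp add: subgroup.m_closed subgroup.m_inv_closed)
  have d1D: "d1 \<in> D"
  proof -
    have "d1 = cm G (inv x) g" using xc g by (simp add: d1_def x'_def cm_def m_assoc)
    then show ?thesis using cm_D[OF inv_closed[OF xc] g] by simp
  qed
  have d2D: "d2 \<in> D"
  proof -
    have "d2 = cm G (inv y) g" using yc g by (simp add: d2_def y'_def cm_def m_assoc)
    then show ?thesis using cm_D[OF inv_closed[OF yc] g] by simp
  qed
  have d1c: "d1 \<in> carrier G" and d2c: "d2 \<in> carrier G" using d1C d2C C_carr by auto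
  have x'e: "x' = x \<otimes> d1" using xc g by (simp add: d1_def x'_def)
  have y'e: "y' = y \<otimes> d2" using yc g by (simp add: d2_def y'_def)
  have c1: "d1 \<otimes> y = y \<otimes> d1" using C_comm[OF y d1D] by simp
  have c2: "d2 \<otimes> x = x \<otimes> d2" using C_comm[OF x d2D] by simp
  have c3: "d2 \<otimes> d1 = d1 \<otimes> d2" using C_comm[OF d1C d2D] by simp
  have p1: "x' \<otimes> y' = (x \<otimes> y) \<otimes> (d1 \<otimes> d2)"
  proof -
    have "x' \<otimes> y' = x \<otimes> (d1 \<otimes> y) \<otimes> d2" using xc yc d1c d2c by (simp add: x'e y'e m_assoc)
    also have "\<dots> = x \<otimes> (y \<otimes> d1) \<otimes> d2" using c1 by simp
    finally show ?thesis using xc yc d1c d2c by (simp add: m_assoc)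
  qed
  have p2: "y' \<otimes> x' = (y \<otimes> x) \<otimes> (d1 \<otimes> d2)"
  proof -
    have "y' \<otimes> x' = y \<otimes> (d2 \<otimes> x) \<otimes> d1" using xc yc d1c d2c by (simp add: x'e y'e m_assoc)
    also have "\<dots> = y \<otimes> x \<otimes> (d2 \<otimes> d1)" using c2 xc yc d1c d2c by (simp add: m_assoc)
    also have "\<dots> = y \<otimes> x \<otimes> (d1 \<otimes> d2)" using c3 by simp
    finally show ?thesis .
  qed
  have "cm G x' y' = cm G x y"
    using xc yc d1c d2c x'C y'C C_carr by (simp add: cm_alt p1 p2 inv_mult_group m_assoc)
  then have "g \<otimes> cm G x y \<otimes> inv g = cm G x y"
    using conj_cm[OF g xc yc] by (simp add: x'_def y'_def)
  moreover have "g \<otimes> cm G x y \<otimes> inv g \<otimes> g = g \<otimes> cm G x y" using g xc yc by (simp add: m_assoc)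
  ultimately show "cm G x y \<otimes> g = g \<otimes> cm G x y" by simp
qed


lemma center_comm: "c \<in> center G \<Longrightarrow> a \<in> carrier G \<Longrightarrow> c \<otimes> a = a \<otimes> c"
  by (simp add: center_def)

lemma center_carr: "c \<in> center G \<Longrightarrow> c \<in> carrier G"
  by (simp add: center_def)

lemma cm_swap: assumes x: "x \<in> C" and y: "y \<in> C" shows "cm G y x = inv (cm G x y)"
proof -
  have xc: "x \<in> carrier G" and yc: "y \<in> carrier G" using x y C_carr by auto
  let ?a = "cm G x y" and ?b = "cm G y x"
  have ac: "?a \<in> carrier G" and bc: "?b \<in> carrier G" using xc yc by auto
  have "x \<otimes> y = ?a \<otimes> (y \<otimes> x)" by (rule cm_eq[OF xc yc])
  also have "y \<otimes> x = ?b \<otimes> (x \<otimes> y)" by (rule cm_eq[OF yc xc])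
  finally have "x \<otimes> y = (?a \<otimes> ?b) \<otimes> (x \<otimes> y)" using ac bc xc yc by (simp add: m_assoc)
  then have "?a \<otimes> ?b = \<one>" using ac bc xc yc by (metis m_closed r_cancel_one')
  then have "?b \<otimes> ?a = \<one>" using ac bc by (simp add: inv_comm)
  then show ?thesis using ac bc by (simp add: inv_equality)
qed

lemma cm_mult_l: assumes x: "x \<in> C" and y: "y \<in> C" and w: "w \<in> C"
  shows "cm G (x \<otimes> y) w = cm G x w \<otimes> cm G y w"
proof -
  have xc: "x \<in> carrier G" and yc: "y \<in> carrier G" and wc: "w \<in> carrier G" using x y w C_carr by auto
  let ?a = "cm G x w" and ?b = "cm G y w"
  have ac: "?a \<in> carrier G" and bc: "?b \<in> carrier G" using xc yc wc by auto
  have bx: "?b \<otimes> x = x \<otimes> ?b" using center_comm[OF cm_center[OF y w] xc] .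
  have ab: "?b \<otimes> ?a = ?a \<otimes> ?b" using center_comm[OF cm_center[OF y w] ac] .
  have "x \<otimes> y \<otimes> w = x \<otimes> (y \<otimes> w)" using xc yc wc by (simp add: m_assoc)
  also have "\<dots> = x \<otimes> (?b \<otimes> (w \<otimes> y))" using cm_eq[OF yc wc] by simp
  also have "\<dots> = (x \<otimes> ?b) \<otimes> (w \<otimes> y)" using xc bc wc yc by (simp add: m_assoc)
  also have "\<dots> = (?b \<otimes> x) \<otimes> (w \<otimes> y)" using bx by simp
  also have "\<dots> = ?b \<otimes> ((x \<otimes> w) \<otimes> y)" using xc bc wc yc by (simp add: m_assoc)
  also have "\<dots> = ?b \<otimes> ((?a \<otimes> (w \<otimes> x)) \<otimes> y)" using cm_eq[OF xc wc] by simp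
  also have "\<dots> = (?b \<otimes> ?a) \<otimes> (w \<otimes> (x \<otimes> y))" using xc bc wc yc ac by (simp add: m_assoc)
  also have "\<dots> = (?a \<otimes> ?b) \<otimes> (w \<otimes> (x \<otimes> y))" using ab by simp
  finally have e1: "x \<otimes> y \<otimes> w = (?a \<otimes> ?b) \<otimes> (w \<otimes> (x \<otimes> y))" .
  have e2: "x \<otimes> y \<otimes> w = cm G (x \<otimes> y) w \<otimes> (w \<otimes> (x \<otimes> y))" using cm_eq[OF m_closed[OF xc yc] wc] .
  from e1 e2 show ?thesis using xc yc wc ac bc by (metis m_closed r_cancel cm_closed)
qed

lemma cm_mult_r: assumes x: "x \<in> C" and y: "y \<in> C" and w: "w \<in> C"
  shows "cm G x (y \<otimes> w) = cm G x y \<otimes> cm G x w"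
proof -
  have xc: "x \<in> carrier G" and yc: "y \<in> carrier G" and wc: "w \<in> carrier G" using x y w C_carr by auto
  have ywC: "y \<otimes> w \<in> C" using C_sub y w by (simp add: subgroup.m_closed)
  have "cm G x (y \<otimes> w) = inv (cm G (y \<otimes> w) x)" using cm_swap[OF ywC x] by simp
  also have "\<dots> = inv (cm G y x \<otimes> cm G w x)" using cm_mult_l[OF y w x] by simp
  also have "\<dots> = inv (inv (cm G x y) \<otimes> inv (cm G x w))" using cm_swap[OF x y] cm_swap[OF x w] by simp
  also have "\<dots> = cm G x w \<otimes> cm G x y" using xc yc wc by (simp add: inv_mult_group)
  also have "\<dots> = cm G x y \<otimes> cm G x w" using center_comm[OF cm_center[OF x w]] xc yc by simp
  finally show ?thesis .
qed


abbreviation "CG \<equiv> G\<lparr>carrier := C\<rparr>"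
abbreviation "Z \<equiv> center CG"
abbreviation "KK \<equiv> G\<lparr>carrier := D \<inter> center G\<rparr>"
abbreviation "VV \<equiv> CG Mod Z"

definition BB :: "'a set \<Rightarrow> 'a set \<Rightarrow> 'a" where
  "BB U W = cm G (SOME u. u \<in> U) (SOME w. w \<in> W)"

lemma CG_group: "group CG" using C_sub by (rule subgroup_imp_group)

lemma Z_def': "Z = {z \<in> C. \<forall>g \<in> C. z \<otimes> g = g \<otimes> z}" by (simp add: center_def)

lemma Z_normal: "Z \<lhd> CG"
proof -
  interpret CG: group CG by (rule CG_group)
  have sub: "subgroup Z CG" by (rule CG.center_subgroup)
  show ?thesis unfolding CG.normal_inv_iff
  proof (intro conjI ballI sub)
    fix x h assume x: "x \<in> carrier CG" and h: "h \<in> Z"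
    have xc: "x \<in> carrier G" and hc: "h \<in> carrier G" using x h C_carr by (auto simp: Z_def')
    have "inv\<^bsub>CG\<^esub> x = inv x" using x C_sub by simp
    moreover have hx: "h \<otimes> x = x \<otimes> h" using h x by (simp add: Z_def')
    moreover have "x \<otimes> h \<otimes> inv x = h"
    proof -
      have "x \<otimes> h \<otimes> inv x = h \<otimes> x \<otimes> inv x" using hx by simp
      also have "\<dots> = h" using xc hc by (simp add: m_assoc)
      finally show ?thesis .
    qed
    ultimately have "x \<otimes>\<^bsub>CG\<^esub> h \<otimes>\<^bsub>CG\<^esub> inv\<^bsub>CG\<^esub> x = h" by simp
    then show "x \<otimes>\<^bsub>CG\<^esub> h \<otimes>\<^bsub>CG\<^esub> inv\<^bsub>CG\<^esub> x \<in> Z" using h by simp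
  qed
qed

lemma VV_group: "group VV" using Z_normal by (rule normal.factorgroup_is_group)

lemma K_sub: "subgroup (D \<inter> center G) G"
  by (rule subgroups_Inter_pair[OF D_subgroup center_subgroup])

lemma KK_comm: "comm_group KK"
proof -
  interpret KK: group KK using K_sub by (rule subgroup_imp_group)
  show ?thesis
  proof (rule KK.group_comm_groupI)
    fix x y assume "x \<in> carrier KK" "y \<in> carrier KK"
    then have "x \<in> center G" "y \<in> carrier G" by (auto simp: center_def)
    then show "x \<otimes>\<^bsub>KK\<^esub> y = y \<otimes>\<^bsub>KK\<^esub> x" using center_comm by simp
  qed
qed

lemma cm_K: "x \<in> C \<Longrightarrow> y \<in> C \<Longrightarrow> cm G x y \<in> D \<inter> center G"
  using cm_D cm_center C_carr by auto

lemma VV_elem: assumes "U \<in> carrier VV" obtains a where "a \<in> C" "U = {z \<otimes> a | z. z \<in> Z}"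
  using assms unfolding FactGroup_def RCOSETS_def r_coset_def by auto

lemma VV_sub: assumes "U \<in> carrier VV" shows "U \<subseteq> C" "U \<noteq> {}"
proof -
  obtain a where a: "a \<in> C" "U = {z \<otimes> a | z. z \<in> Z}" using VV_elem[OF assms] by blast
  have "\<one> \<in> Z" using C_sub C_carr by (auto simp: Z_def' subgroup.one_closed)
  then have "a \<in> U" using a C_carr by force
  then show "U \<noteq> {}" by blast
  show "U \<subseteq> C" using a C_sub by (auto simp: Z_def' subgroup.m_closed)
qed

lemma cm_coset: assumes U: "U \<in> carrier VV" and u: "u \<in> U" "u' \<in> U" and w: "w \<in> C"
  shows "cm G u w = cm G u' w"
proof -
  obtain a where a: "a \<in> C" "U = {z \<otimes> a | z. z \<in> Z}" using VV_elem[OF U] by blast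
  have red: "cm G (z \<otimes> a) w = cm G a w" if z: "z \<in> Z" for z
  proof -
    have zC: "z \<in> C" using z by (simp add: Z_def')
    have "cm G z w = \<one>" using z w C_carr cm_one_iff by (auto simp: Z_def')
    then show ?thesis using cm_mult_l[OF zC a(1) w] cm_K[OF a(1) w] C_carr[OF zC] by (auto simp: center_def)
  qed
  obtain z1 z2 where "z1 \<in> Z" "z2 \<in> Z" "u = z1 \<otimes> a" "u' = z2 \<otimes> a" using u a by blast
  then show ?thesis using red by simp
qed

lemma BB_rep: assumes U: "U \<in> carrier VV" and W: "W \<in> carrier VV" and u: "u \<in> U" and w: "w \<in> W"
  shows "BB U W = cm G u w"
proof -
  have su: "(SOME u. u \<in> U) \<in> U" using VV_sub(2)[OF U] by (simp add: some_in_eq)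
  have sw: "(SOME w. w \<in> W) \<in> W" using VV_sub(2)[OF W] by (simp add: some_in_eq)
  have uC: "u \<in> C" and wC: "w \<in> C" using VV_sub(1) U W u w by blast+
  have suC: "(SOME u. u \<in> U) \<in> C" and swC: "(SOME w. w \<in> W) \<in> C" using VV_sub(1) U W su sw by blast+
  have "BB U W = cm G u (SOME w. w \<in> W)" unfolding BB_def using cm_coset[OF U su u swC] .
  also have "\<dots> = inv (cm G (SOME w. w \<in> W) u)" using cm_swap[OF swC uC] by simp
  also have "\<dots> = inv (cm G w u)" using cm_coset[OF W sw w uC] by simp
  also have "\<dots> = cm G u w" using cm_swap[OF wC uC] by simp
  finally show ?thesis .
qed


lemma VV_mult_mem: assumes "U \<in> carrier VV" "W \<in> carrier VV" "u \<in> U" "w \<in> W"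
  shows "u \<otimes> w \<in> U \<otimes>\<^bsub>VV\<^esub> W"
proof -
  have "U \<otimes>\<^bsub>VV\<^esub> W = U <#>\<^bsub>CG\<^esub> W" by simp
  moreover have "u \<otimes> w \<in> U <#>\<^bsub>CG\<^esub> W" using assms(3,4) unfolding set_mult_def by force
  ultimately show ?thesis by simp
qed

lemma VV_mult_closed: "U \<in> carrier VV \<Longrightarrow> W \<in> carrier VV \<Longrightarrow> U \<otimes>\<^bsub>VV\<^esub> W \<in> carrier VV"
  by (rule monoid.m_closed[OF group.is_monoid[OF VV_group]])

lemma symp_VV: "symp VV KK BB p"
proof (intro symp.intro symp_axioms.intro)
  show "group VV" by (rule VV_group)
  show "comm_group KK" by (rule KK_comm)
  show "Factorial_Ring.prime p" by (rule p)
  show "card (carrier KK) = p" using cardK by simp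
next
  fix U W assume U: "U \<in> carrier VV" and W: "W \<in> carrier VV"
  obtain u w where u: "u \<in> U" and w: "w \<in> W" using VV_sub(2)[OF U] VV_sub(2)[OF W] by blast
  have "u \<in> C" "w \<in> C" using VV_sub(1) U W u w by blast+
  then show "BB U W \<in> carrier KK" using BB_rep[OF U W u w] cm_K by simp
next
  fix U W Y3 assume U: "U \<in> carrier VV" and W: "W \<in> carrier VV" and Y3: "Y3 \<in> carrier VV"
  obtain u w x where u: "u \<in> U" and w: "w \<in> W" and x: "x \<in> Y3"
    using VV_sub(2)[OF U] VV_sub(2)[OF W] VV_sub(2)[OF Y3] by blast
  have uC: "u \<in> C" and wC: "w \<in> C" and xC: "x \<in> C" using VV_sub(1) U W Y3 u w x by blast+
  show "BB (U \<otimes>\<^bsub>VV\<^esub> W) Y3 = BB U Y3 \<otimes>\<^bsub>KK\<^esub> BB W Y3"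
    using BB_rep[OF VV_mult_closed[OF U W] Y3 VV_mult_mem[OF U W u w] x] BB_rep[OF U Y3 u x] BB_rep[OF W Y3 w x]
      cm_mult_l[OF uC wC xC] by simp
  show "BB U (W \<otimes>\<^bsub>VV\<^esub> Y3) = BB U W \<otimes>\<^bsub>KK\<^esub> BB U Y3"
    using BB_rep[OF U VV_mult_closed[OF W Y3] u VV_mult_mem[OF W Y3 w x]] BB_rep[OF U W u w] BB_rep[OF U Y3 u x]
      cm_mult_r[OF uC wC xC] by simp
next
  fix U W assume U: "U \<in> carrier VV" and W: "W \<in> carrier VV"
  obtain u w where u: "u \<in> U" and w: "w \<in> W" using VV_sub(2)[OF U] VV_sub(2)[OF W] by blast
  have uC: "u \<in> C" and wC: "w \<in> C" using VV_sub(1) U W u w by blast+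
  have "inv\<^bsub>KK\<^esub> (cm G u w) = inv (cm G u w)" using K_sub cm_K[OF uC wC] by simp
  then show "BB W U = inv\<^bsub>KK\<^esub> (BB U W)"
    using BB_rep[OF W U w u] BB_rep[OF U W u w] cm_swap[OF uC wC] by simp
next
  fix U assume U: "U \<in> carrier VV"
  obtain u where u: "u \<in> U" using VV_sub(2)[OF U] by blast
  have uC: "u \<in> C" using VV_sub(1) U u by blast
  show "BB U U = \<one>\<^bsub>KK\<^esub>" using BB_rep[OF U U u u] C_carr[OF uC] by simp
next
  fix U assume U: "U \<in> carrier VV" and nd: "\<And>W. W \<in> carrier VV \<Longrightarrow> BB U W = \<one>\<^bsub>KK\<^esub>"
  obtain u where u: "u \<in> U" using VV_sub(2)[OF U] by blast
  have uC: "u \<in> C" using VV_sub(1) U u by blast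
  have uZ: "u \<in> Z"
  proof -
    have "u \<otimes> c = c \<otimes> u" if c: "c \<in> C" for c
    proof -
      let ?W = "Z #>\<^bsub>CG\<^esub> c"
      have W: "?W \<in> carrier VV" using c unfolding FactGroup_def RCOSETS_def by auto
      have "\<one> \<in> Z" using C_sub C_carr by (auto simp: Z_def' subgroup.one_closed)
      then have cW: "c \<in> ?W" using c C_carr unfolding r_coset_def by force
      have "cm G u c = \<one>" using nd[OF W] BB_rep[OF U W u cW] by simp
      then show ?thesis using cm_one_iff C_carr uC c by blast
    qed
    then show ?thesis using uC by (simp add: Z_def')
  qed
  obtain a where a: "a \<in> C" "U = {z \<otimes> a | z. z \<in> Z}" using VV_elem[OF U] by blast
  have Ua: "U = Z #>\<^bsub>CG\<^esub> a" using a(2) unfolding r_coset_def by auto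
  interpret CG: group CG by (rule CG_group)
  have subZ: "subgroup Z CG" by (rule CG.center_subgroup)
  have "U = Z #>\<^bsub>CG\<^esub> u" using CG.repr_independence[of u Z a] u Ua a(1) subZ by simp
  also have "\<dots> = Z" using subgroup.rcos_const[OF subZ CG_group uZ] .
  finally show "U = \<one>\<^bsub>VV\<^esub>" by simp
qed

lemma VV_iso: "\<exists>s. VV \<cong> PP p s"
proof -
  have "finite (carrier VV)"
  proof -
    have "carrier VV \<subseteq> Pow C" using VV_sub by auto
    moreover have "finite C" using fin C_carr finite_subset by (metis subsetI)
    ultimately show ?thesis by (meson finite_Pow_iff finite_subset)
  qed
  then obtain s where "PP p s \<cong> VV" using symp_iso[OF symp_VV] by blast
  then have "VV \<cong> PP p s" using group.iso_sym[OF group_PP] by blast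
  then show ?thesis by blast
qed


lemma finC: "finite C" using fin C_carr by (meson finite_subset subsetI)

lemma Z_sub: "Z \<subseteq> C" by (auto simp: Z_def')

lemma one_Z: "\<one> \<in> Z" using C_sub C_carr by (auto simp: Z_def' subgroup.one_closed)

lemma p_gt0: "p > 0" using p prime_gt_0_nat by blast

lemma finK: "finite (D \<inter> center G)" using cardK p_gt0 card_ge_0_finite by force

lemma cent_card:
  assumes x: "x \<in> C" "x \<notin> Z"
  shows "p * card {y \<in> C. x \<otimes> y = y \<otimes> x} = card C"
proof -
  interpret CG: group CG by (rule CG_group)
  interpret KK: comm_group KK by (rule KK_comm)
  define f where "f = cm G x"
  have hom: "f \<in> hom CG KK"
  proof (rule homI)
    fix y assume "y \<in> carrier CG" then show "f y \<in> carrier KK" using cm_K x(1) by (simp add: f_def)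
  next
    fix y w assume "y \<in> carrier CG" "w \<in> carrier CG"
    then show "f (y \<otimes>\<^bsub>CG\<^esub> w) = f y \<otimes>\<^bsub>KK\<^esub> f w" using cm_mult_r x(1) by (simp add: f_def)
  qed
  interpret h: group_hom CG KK f
    by (simp add: group_hom_def group_hom_axioms_def hom CG.is_group KK.is_group)
  have ker: "kernel CG KK f = {y \<in> C. x \<otimes> y = y \<otimes> x}"
    unfolding kernel_def f_def using cm_one_iff C_carr x(1) by auto
  let ?I = "f ` C"
  have Isub: "subgroup ?I KK" using h.img_is_subgroup by simp
  have IK: "?I \<subseteq> D \<inter> center G" using Isub subgroup.subset by force
  have oK: "order KK = p" using cardK by (simp add: order_def)
  have "card (rcosets\<^bsub>KK\<^esub> ?I) * card ?I = order KK" using KK.lagrange[OF Isub] .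
  then have e: "card (rcosets\<^bsub>KK\<^esub> ?I) * card ?I = p" using oK by simp
  then have dvd: "card ?I dvd p" by (metis dvd_triv_right)
  have f1: "f \<one> = \<one>" using x(1) C_carr by (simp add: f_def cm_def)
  have "\<one> \<in> C" using C_sub by (rule subgroup.one_closed)
  then have oneI: "\<one> \<in> ?I" using f1 by (metis image_eqI)
  obtain c where c: "c \<in> C" "\<not> (x \<otimes> c = c \<otimes> x)" using x by (auto simp: Z_def')
  have "f c \<noteq> \<one>" using c cm_one_iff C_carr x(1) by (simp add: f_def)
  moreover have "f c \<in> ?I" using c by blast
  ultimately have "card ?I \<noteq> 1"
  proof -
    assume a1: "f c \<noteq> \<one>" and a2: "f c \<in> ?I"
    show "card ?I \<noteq> 1"
    proof
      assume "card ?I = 1"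
      then obtain a where "?I = {a}" by (rule card_1_singletonE)
      then show False using a1 a2 oneI by auto
    qed
  qed
  moreover have "card ?I \<noteq> 0" using oneI finC by auto
  ultimately have "card ?I = p" using dvd p unfolding prime_nat_iff by auto
  then have Ieq: "?I = D \<inter> center G" by (intro card_subset_eq[OF finK IK]) (simp add: cardK)
  have "CG Mod kernel CG KK f \<cong> KK" by (rule h.FactGroup_iso) (use Ieq in simp)
  then have "card (carrier (CG Mod kernel CG KK f)) = card (carrier KK)" by (rule iso_same_card)
  then have "card (rcosets\<^bsub>CG\<^esub> (kernel CG KK f)) = p" using cardK by (simp add: FactGroup_def)
  moreover have "card (rcosets\<^bsub>CG\<^esub> (kernel CG KK f)) * card (kernel CG KK f) = card C"
    using CG.lagrange[OF h.subgroup_kernel] by (simp add: order_def)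
  ultimately show ?thesis using ker by simp
qed


lemma lag_Z: "card (rcosets\<^bsub>CG\<^esub> Z) * card Z = card C"
proof -
  interpret CG: group CG by (rule CG_group)
  show ?thesis using CG.lagrange[OF CG.center_subgroup] by (simp add: order_def)
qed

lemma prob:
  assumes q: "card (rcosets\<^bsub>CG\<^esub> Z) = p ^ (2 * s)"
  shows "comm_prob CG = 1 / real p * (1 + (real p - 1) / real p ^ (2 * s))"
proof -
  define Cx where "Cx x = {y \<in> C. x \<otimes> y = y \<otimes> x}" for x
  have S: "{(x, y). x \<in> carrier CG \<and> y \<in> carrier CG \<and> x \<otimes>\<^bsub>CG\<^esub> y = y \<otimes>\<^bsub>CG\<^esub> x} = Sigma C Cx"
    by (auto simp: Cx_def)
  have finCx: "\<forall>x\<in>C. finite (Cx x)" using finC by (auto simp: Cx_def)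
  have cS: "card (Sigma C Cx) = (\<Sum>x\<in>C. card (Cx x))" using finC finCx by (rule card_SigmaI)
  have finZ: "finite Z" using finC Z_sub finite_subset by blast
  let ?n = "real (card C)" and ?z = "real (card Z)" and ?p = "real p"
  have sumZ: "(\<Sum>x\<in>Z. real (card (Cx x))) = ?z * ?n"
  proof -
    have "\<And>x. x \<in> Z \<Longrightarrow> Cx x = C" by (auto simp: Cx_def Z_def')
    then show ?thesis by simp
  qed
  have sumCZ: "(\<Sum>x\<in>C - Z. real (card (Cx x))) = (?n - ?z) * (?n / ?p)"
  proof -
    have "\<And>x. x \<in> C - Z \<Longrightarrow> real (card (Cx x)) = ?n / ?p"
    proof -
      fix x assume "x \<in> C - Z"
      then have "p * card (Cx x) = card C" using cent_card by (simp add: Cx_def)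
      then have "?p * real (card (Cx x)) = ?n" by (metis of_nat_mult)
      then show "real (card (Cx x)) = ?n / ?p" using p_gt0 by (simp add: field_simps)
    qed
    then have "(\<Sum>x\<in>C - Z. real (card (Cx x))) = real (card (C - Z)) * (?n / ?p)" by simp
    moreover have "card (C - Z) = card C - card Z" using finZ Z_sub by (rule card_Diff_subset)
    moreover have "card Z \<le> card C" using Z_sub finC by (rule card_mono[rotated])
    ultimately show ?thesis by simp
  qed
  have "(\<Sum>x\<in>C. real (card (Cx x))) = (\<Sum>x\<in>C - Z. real (card (Cx x))) + (\<Sum>x\<in>Z. real (card (Cx x)))"
    using Z_sub finC by (rule sum.subset_diff)
  moreover have "real (card (Sigma C Cx)) = (\<Sum>x\<in>C. real (card (Cx x)))" using cS by simp
  ultimately have tot: "real (card (Sigma C Cx)) = ?z * ?n + (?n - ?z) * (?n / ?p)"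
    using sumZ sumCZ by linarith
  define Q where "Q = ?p ^ (2 * s)"
  have "card C = p ^ (2 * s) * card Z" using lag_Z q by simp
  then have "?n = real (p ^ (2 * s)) * ?z" by (metis of_nat_mult)
  then have nQ: "?n = Q * ?z" by (simp add: Q_def)
  have zpos: "?z > 0" using one_Z finZ by (simp add: card_gt_0_iff) blast
  have Qpos: "Q > 0" using p_gt0 by (simp add: Q_def)
  have ppos: "?p > 0" using p_gt0 by simp
  have "comm_prob CG = real (card (Sigma C Cx)) / ?n ^ 2"
    unfolding comm_prob_def S by simp
  also have "\<dots> = (?z * (Q * ?z) + (Q * ?z - ?z) * (Q * ?z / ?p)) / (Q * ?z) ^ 2"
    using tot nQ by simp
  also have "\<dots> = 1 / ?p * (1 + (?p - 1) / Q)"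
    by (rule prob_arith[OF zpos Qpos ppos])
  finally show ?thesis unfolding Q_def .
qed

end

theorem lemma3p1:
  fixes G :: "('a, 'b) monoid_scheme" and p :: nat
  assumes "group G" and "finite (carrier G)" and "Factorial_Ring.prime p"
    and "card (derived G (carrier G) \<inter> center G) = p"
    and "\<not> comm_group (G\<lparr>carrier := centralizer G (derived G (carrier G))\<rparr>)"
  shows "\<exists>s::nat. s > 0 \<and>
    (let C = G\<lparr>carrier := centralizer G (derived G (carrier G))\<rparr> in
      (C Mod center C) \<cong> product_group {..<s} (\<lambda>_. integer_mod_group p \<times>\<times> integer_mod_group p)
      \<and> comm_prob C = 1 / real p * (1 + (real p - 1) / real p ^ (2 * s)))"
proof -
  interpret cpsetup G p using assms by (simp add: cpsetup_def cpsetup_axioms_def)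
  obtain s where iso: "VV \<cong> PP p s" using VV_iso by blast
  have "card (carrier VV) = card (carrier (PP p s))" using iso by (rule iso_same_card)
  also have "\<dots> = (p * p) ^ s" using p_gt0 by (simp add: card_PiE carrier_integer_mod_group)
  also have "\<dots> = p ^ (2 * s)" by (simp add: power_mult power2_eq_square)
  finally have q: "card (rcosets\<^bsub>CG\<^esub> Z) = p ^ (2 * s)" by (simp add: FactGroup_def)
  have s0: "s > 0"
  proof (rule ccontr)
    assume "\<not> s > 0"
    then have "card (rcosets\<^bsub>CG\<^esub> Z) = 1" using q by simp
    then have "card Z = card C" using lag_Z by simp
    then have "Z = C" using Z_sub finC by (metis card_subset_eq)
    then have "comm_group CG"
      using CG_group group.group_comm_groupI by (fastforce simp: Z_def')
    then show False using assms(5) by simp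
  qed
  show ?thesis
    using s0 iso prob[OF q] by (auto simp: Let_def)
qed

end
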